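(* Suppose the Oracle Mechanism with a polynomial-time $\gamma$-approximation oracle ($0<\gamma\le 1$), as described in the context, is run with the reduced budget $\gamma B$ in place of $B$. Then there is a function $\varepsilon(\theta)\ge0$ depending only on $\theta$ with $\varepsilon(\theta)\to0$ as $\theta\to0$ such that on every instance with largeness ratio $\theta$, the total payment is at most $(1+\varepsilon(\theta))B$ and the utility of the winning set is at least $(\gamma^2/2-\varepsilon(\theta))F^\star$, where $F^\star$ is the optimum for the original budget $B$.
   Context: Sellers $S=\{1,\dots,n\}$ each own one indivisible item and have a cost $c_i\ge0$. The buyer's utility is a monotone submodular $F:2^S\to\mathbb R_{\ge0}$, budget $B>0$. $c(T)=\sum_{i\in T}c_i$. For a budget $b$, $F^\star_b=\max\{F(T):c(T)\le b\}$; $F^\star=F^\star_B>0$; the largeness ratio is $\theta=\max_sF(\{s\})/F^\star$. Greedy sequence $\chi(F)=\langle x_1,\dots,x_n\rangle$: with $\chi_0=\emptyset$, $\chi_i=\{x_1,\dots,x_i\}$, $x_i$ maximizes $(F(\chi_{i-1}\cup\{s\})-F(\chi_{i-1}))/c_s$ over $s\notin\chi_{i-1}$ (ratio $+\infty$ if $c_s=0$; ties arbitrary); $\partial_i=F(\chi_i)-F(\chi_{i-1})$. A $\gamma$-approximation oracle, given an instance with known costs and a budget $b$, returns in polynomial time a set $T$ with $c(T)\le b$ and $F(T)\ge\gamma F^\star_b$. The mechanism with budget $b$: $\hat F$ = utility of the oracle's solution (budget $b$); for each seller $s$, $\hat F_s$ = utility of the oracle's solution with $s$ removed, $r_s=b/\hat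 F_s$; take the largest $k$ with $F(\chi_k)\le\hat F/2$; winners $\chi_k$; winner $x_j$ is paid $2r_{x_j}\partial_j$. Here $b=\gamma B$. *)

theory Defs
  imports Complex_Main "HOL-Library.Extended_Real"
begin

definition monotone_submodular :: "('a set \<Rightarrow> real) \<Rightarrow> 'a set \<Rightarrow> bool" where
  "monotone_submodular F S \<longleftrightarrow>
     (\<forall>A. A \<subseteq> S \<longrightarrow> 0 \<le> F A) \<and>
     (\<forall>A B. A \<subseteq> B \<and> B \<subseteq> S \<longrightarrow> F A \<le> F B) \<and>
     (\<forall>A B. A \<subseteq> S \<and> B \<subseteq> S \<longrightarrow> F (A \<union> B) + F (A \<inter> B) \<le> F A + F B)"

definition Fopt :: "('a set \<Rightarrow> real) \<Rightarrow> ('a \<Rightarrow> real) \<Rightarrow> 'a set \<Rightarrow> real \<Rightarrow> real" where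
  "Fopt F c A b = Max (F ` {T. T \<subseteq> A \<and> sum c T \<le> b})"

definition largeness :: "('a set \<Rightarrow> real) \<Rightarrow> ('a \<Rightarrow> real) \<Rightarrow> 'a set \<Rightarrow> real \<Rightarrow> real" where
  "largeness F c S B = Max ((\<lambda>s. F {s}) ` S) / Fopt F c S B"

definition approx_oracle ::
  "real \<Rightarrow> ('a set \<Rightarrow> real) \<Rightarrow> ('a \<Rightarrow> real) \<Rightarrow> 'a set \<Rightarrow> ('a set \<Rightarrow> real \<Rightarrow> 'a set) \<Rightarrow> bool" where
  "approx_oracle \<gamma> F c S Orc \<longleftrightarrow>
     (\<forall>A b. A \<subseteq> S \<and> 0 < b \<longrightarrow>
        Orc A b \<subseteq> A \<and> sum c (Orc A b) \<le> b \<and> \<gamma> * Fopt F c A b \<le> F (Orc A b))"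

definition greedy_ratio :: "('a set \<Rightarrow> real) \<Rightarrow> ('a \<Rightarrow> real) \<Rightarrow> 'a set \<Rightarrow> 'a \<Rightarrow> ereal" where
  "greedy_ratio F c A s =
     (if c s = 0 then \<infinity> else ereal ((F (insert s A) - F A) / c s))"

(* xs = <x_1,...,x_n> is a greedy sequence (ties arbitrary); chi_i = set (take i xs) *)
definition is_greedy_seq :: "('a set \<Rightarrow> real) \<Rightarrow> ('a \<Rightarrow> real) \<Rightarrow> 'a set \<Rightarrow> 'a list \<Rightarrow> bool" where
  "is_greedy_seq F c S xs \<longleftrightarrow> distinct xs \<and> set xs = S \<and>
     (\<forall>i < length xs. \<forall>s \<in> S - set (take i xs).
        greedy_ratio F c (set (take i xs)) s \<le> greedy_ratio F c (set (take i xs)) (xs ! i))"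

definition mech_cutoff ::
  "('a set \<Rightarrow> real) \<Rightarrow> 'a set \<Rightarrow> ('a set \<Rightarrow> real \<Rightarrow> 'a set) \<Rightarrow> real \<Rightarrow> 'a list \<Rightarrow> nat \<Rightarrow> bool" where
  "mech_cutoff F S Orc b xs k \<longleftrightarrow> k \<le> length xs \<and> F (set (take k xs)) \<le> F (Orc S b) / 2 \<and>
     (\<forall>k'. k < k' \<and> k' \<le> length xs \<longrightarrow> F (Orc S b) / 2 < F (set (take k' xs)))"

(* total payment: winner x_{j+1} = xs!j is paid 2 r_{x_{j+1}} \<partial>_{j+1},
   r_s = b / Fhat_s, Fhat_s = F(oracle solution on S - {s}, budget b) *)
definition mech_payment ::
  "('a set \<Rightarrow> real) \<Rightarrow> 'a set \<Rightarrow> ('a set \<Rightarrow> real \<Rightarrow> 'a set) \<Rightarrow> real \<Rightarrow> 'a list \<Rightarrow> nat \<Rightarrow> real" where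
  "mech_payment F S Orc b xs k =
     (\<Sum>j<k. 2 * (b / F (Orc (S - {xs ! j}) b)) * (F (set (take (Suc j) xs)) - F (set (take j xs))))"

end

theory Submission
  imports Defs
begin


lemma ms_nonneg: "monotone_submodular F S \<Longrightarrow> A \<subseteq> S \<Longrightarrow> 0 \<le> F A"
  unfolding monotone_submodular_def by blast
lemma ms_mono: "monotone_submodular F S \<Longrightarrow> A \<subseteq> B \<Longrightarrow> B \<subseteq> S \<Longrightarrow> F A \<le> F B"
  unfolding monotone_submodular_def by blast
lemma ms_sub: "monotone_submodular F S \<Longrightarrow> A \<subseteq> S \<Longrightarrow> B \<subseteq> S \<Longrightarrow> F (A \<union> B) + F (A \<inter> B) \<le> F A + F B"
  unfolding monotone_submodular_def by blast

lemma ms_insert: assumes "monotone_submodular F S" "A \<subseteq> S" "t \<in> S"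
  shows "F (insert t A) \<le> F A + F {t}"
proof -
  have "F (A \<union> {t}) + F (A \<inter> {t}) \<le> F A + F {t}" using ms_sub[OF assms(1,2), of "{t}"] assms(3) by simp
  moreover have "0 \<le> F (A \<inter> {t})" using ms_nonneg[OF assms(1), of "A \<inter> {t}"] assms(2) by blast
  ultimately show ?thesis by simp
qed

lemma ms_remove: assumes "monotone_submodular F S" "T \<subseteq> S" "t \<in> S"
  shows "F T \<le> F (T - {t}) + F {t}"
proof -
  have "F T \<le> F (insert t (T - {t}))" by (rule ms_mono[OF assms(1)]) (use assms in blast)+
  also have "\<dots> \<le> F (T - {t}) + F {t}" using ms_insert[OF assms(1), of "T - {t}" t] assms by blast
  finally show ?thesis .
qed

lemma tele: assumes "monotone_submodular F S" "T \<subseteq> S" "finite A" "A \<subseteq> T"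
  shows "(\<Sum>t\<in>A. F T - F (T - {t})) \<le> F T - F (T - A)"
  using assms(3,4)
proof (induction A rule: finite_induct)
  case empty then show ?case by simp
next
  case (insert a A)
  have a: "a \<in> T" "A \<subseteq> T" using insert by auto
  have s1: "T - {a} \<subseteq> S" "T - A \<subseteq> S" using assms(2) by blast+
  have "F ((T - {a}) \<union> (T - A)) + F ((T - {a}) \<inter> (T - A)) \<le> F (T - {a}) + F (T - A)"
    by (rule ms_sub[OF assms(1) s1])
  moreover have "(T - {a}) \<union> (T - A) = T" using a insert(2) by blast
  moreover have "(T - {a}) \<inter> (T - A) = T - insert a A" by blast
  ultimately have "F T + F (T - insert a A) \<le> F (T - {a}) + F (T - A)" by simp
  then show ?case using insert a by simp
qed

lemma avg: assumes "monotone_submodular F S" "T \<subseteq> S" "finite T" "T \<noteq> {}"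
  "\<forall>s\<in>S. 0 \<le> c s" "0 < sum c T"
  shows "\<exists>t\<in>T. sum c T * (F T - F (T - {t})) \<le> c t * F T"
proof (rule ccontr)
  assume "\<not> ?thesis"
  then have h: "\<forall>t\<in>T. c t * F T < sum c T * (F T - F (T - {t}))" by auto
  have "(\<Sum>t\<in>T. c t * F T) < (\<Sum>t\<in>T. sum c T * (F T - F (T - {t})))"
    by (rule sum_strict_mono[OF assms(3,4)]) (use h in blast)
  also have "\<dots> = sum c T * (\<Sum>t\<in>T. F T - F (T - {t}))" by (simp add: sum_distrib_left)
  also have "\<dots> \<le> sum c T * (F T - F (T - T))"
    using tele[OF assms(1,2,3)] assms(6) by (intro mult_left_mono) auto
  also have "\<dots> \<le> sum c T * F T" using ms_nonneg[OF assms(1), of "{}"] assms(6) by simp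
  finally have "(\<Sum>t\<in>T. c t * F T) < sum c T * F T" .
  then show False by (simp add: sum_distrib_right)
qed

lemma sum_c_mono: "\<forall>s\<in>S. 0 \<le> (c::'a\<Rightarrow>real) s \<Longrightarrow> finite S \<Longrightarrow> A \<subseteq> B \<Longrightarrow> B \<subseteq> S \<Longrightarrow> sum c A \<le> sum c B"
  by (rule sum_mono2) (auto intro: finite_subset)

lemma knap: assumes ms: "monotone_submodular F S" and fin: "finite S" and cnn: "\<forall>s\<in>S. 0 \<le> c s"
  and m: "\<forall>t\<in>S. F {t} \<le> m"
  shows "T \<subseteq> S \<Longrightarrow> 0 \<le> \<beta> \<Longrightarrow> \<beta> < sum c T \<Longrightarrow> \<exists>U\<subseteq>T. sum c U \<le> \<beta> \<and> \<beta> / sum c T * F T - m \<le> F U"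
proof (induction "card T" arbitrary: T rule: less_induct)
  case less
  have finT: "finite T" using less.prems fin finite_subset by blast
  have ne: "T \<noteq> {}" using less.prems by auto
  have cpos: "0 < sum c T" using less.prems by linarith
  obtain t where t: "t \<in> T" "sum c T * (F T - F (T - {t})) \<le> c t * F T"
    using avg[OF ms less.prems(1) finT ne cnn cpos] by blast
  have tS: "t \<in> S" using t less.prems by auto
  have FT: "0 \<le> F T" using ms_nonneg[OF ms less.prems(1)] .
  have ct': "sum c (T - {t}) = sum c T - c t" using t finT by (simp add: sum_diff1)
  have rem: "F T \<le> F (T - {t}) + m" using ms_remove[OF ms less.prems(1) tS] m tS by auto
  show ?case
  proof (cases "sum c (T - {t}) \<le> \<beta>")
    case True
    have "\<beta> * F T \<le> sum c T * F T" using FT less.prems(3) by (intro mult_right_mono) auto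
    then have "\<beta> / sum c T * F T \<le> F T" using cpos by (simp add: divide_simps mult.commute)
    then show ?thesis using True rem by (intro exI[of _ "T - {t}"]) auto
  next
    case False
    have cd: "card (T - {t}) < card T" using t finT by (meson card_Diff1_less)
    have sub: "T - {t} \<subseteq> S" using less.prems(1) by blast
    have lt: "\<beta> < sum c (T - {t})" using False by linarith
    obtain U where U: "U \<subseteq> T - {t}" "sum c U \<le> \<beta>" "\<beta> / sum c (T - {t}) * F (T - {t}) - m \<le> F U"
      using less.hyps[OF cd sub less.prems(2) lt] by blast
    have cp': "0 < sum c (T - {t})" using False less.prems by linarith
    have key: "sum c (T - {t}) * F T \<le> sum c T * F (T - {t})"
    proof -
      have e1: "sum c T * (F T - F (T - {t})) = sum c T * F T - sum c T * F (T - {t})"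
        by (simp add: right_diff_distrib)
      have e2: "sum c (T - {t}) * F T = sum c T * F T - c t * F T" by (simp add: ct' left_diff_distrib)
      show ?thesis using e1 e2 t(2) by linarith
    qed
    have "F T / sum c T \<le> F (T - {t}) / sum c (T - {t})"
      using key cp' cpos by (simp add: divide_simps mult.commute)
    then have "\<beta> * (F T / sum c T) \<le> \<beta> * (F (T - {t}) / sum c (T - {t}))"
      using less.prems(2) by (metis mult_left_mono)
    then show ?thesis using U by (intro exI[of _ U]) auto
  qed
qed



lemma fopt_ge: assumes "finite A" "T \<subseteq> A" "sum c T \<le> b" shows "F T \<le> Fopt F c A b"
proof -
  have "finite {T. T \<subseteq> A \<and> sum c T \<le> b}" by (rule finite_subset[of _ "Pow A"]) (use assms in auto)
  then show ?thesis unfolding Fopt_def using assms by (intro Max_ge) auto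
qed

lemma fopt_obt: assumes "finite A" "0 \<le> b" shows "\<exists>T\<subseteq>A. sum c T \<le> b \<and> F T = Fopt F c A b"
proof -
  have fin: "finite {T. T \<subseteq> A \<and> sum c T \<le> b}" by (rule finite_subset[of _ "Pow A"]) (use assms in auto)
  have "{} \<in> {T. T \<subseteq> A \<and> sum c T \<le> b}" using assms by auto
  then have "Fopt F c A b \<in> F ` {T. T \<subseteq> A \<and> sum c T \<le> b}" unfolding Fopt_def
    using fin by (intro Max_in) auto
  then show ?thesis by auto
qed

theorem corollary2:
  fixes \<gamma> :: real
  assumes "0 < \<gamma>" and "\<gamma> \<le> 1"
  shows "\<exists>\<epsilon> :: real \<Rightarrow> real. (\<forall>t. 0 \<le> \<epsilon> t) \<and> (\<epsilon> \<longlongrightarrow> 0) (at_right 0) \<and>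
    (\<forall>(n::nat) (c::nat \<Rightarrow> real) (F::nat set \<Rightarrow> real) (B::real)
        (Orc::nat set \<Rightarrow> real \<Rightarrow> nat set) (xs::nat list) (k::nat).
       (\<forall>s \<in> {1..n}. 0 \<le> c s) \<and> monotone_submodular F {1..n} \<and> 0 < B \<and>
       0 < Fopt F c {1..n} B \<and>
       approx_oracle \<gamma> F c {1..n} Orc \<and>
       is_greedy_seq F c {1..n} xs \<and>
       mech_cutoff F {1..n} Orc (\<gamma> * B) xs k
       \<longrightarrow>
       mech_payment F {1..n} Orc (\<gamma> * B) xs k \<le> (1 + \<epsilon> (largeness F c {1..n} B)) * B \<and>
       (\<gamma>\<^sup>2 / 2 - \<epsilon> (largeness F c {1..n} B)) * Fopt F c {1..n} B \<le> F (set (take k xs)))"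
proof -
  define eps where "eps t = (if \<bar>t\<bar> \<le> \<gamma>/4 then (2/\<gamma> + 2) * \<bar>t\<bar> else 2)" for t :: real
  have eps_nn: "\<forall>t. 0 \<le> eps t" unfolding eps_def using assms by auto
  have lim: "(eps \<longlongrightarrow> 0) (at_right 0)"
  proof -
    have l1: "((\<lambda>t. (2/\<gamma> + 2) * \<bar>t\<bar>) \<longlongrightarrow> (2/\<gamma> + 2) * \<bar>0::real\<bar>) (at_right 0)"
      by (intro tendsto_intros)
    have ev: "eventually (\<lambda>t. t \<in> {0<..<\<gamma>/4}) (at_right (0::real))"
      using assms by (intro eventually_at_right_real) auto
    have "eventually (\<lambda>t. (2/\<gamma> + 2) * \<bar>t\<bar> = eps t) (at_right (0::real))"
      using ev by eventually_elim (auto simp: eps_def)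
    from tendsto_cong[OF this] l1 show ?thesis by simp
  qed
  have main: "mech_payment F {1..n} Orc (\<gamma> * B) xs k \<le> (1 + eps (largeness F c {1..n} B)) * B \<and>
       (\<gamma>\<^sup>2 / 2 - eps (largeness F c {1..n} B)) * Fopt F c {1..n} B \<le> F (set (take k xs))"
    if cnn: "\<forall>s \<in> {1..n}. 0 \<le> c s" and ms: "monotone_submodular F {1..n}" and Bpos: "0 < B"
      and Fspos: "0 < Fopt F c {1..n} B" and orc: "approx_oracle \<gamma> F c {1..n} Orc"
      and gr: "is_greedy_seq F c {1..n} xs" and cut: "mech_cutoff F {1..n} Orc (\<gamma> * B) xs k"
    for n :: nat and c :: "nat \<Rightarrow> real" and F :: "nat set \<Rightarrow> real" and B :: real
      and Orc :: "nat set \<Rightarrow> real \<Rightarrow> nat set" and xs :: "nat list" and k :: nat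
  proof -
    define S where "S = {1..(n::nat)}"
    define b where "b = \<gamma> * B"
    define Fs where "Fs = Fopt F c S B"
    define P where "P = Fopt F c S b"
    define Fh where "Fh = F (Orc S b)"
    define \<theta> where "\<theta> = largeness F c S B"
    define \<chi> where "\<chi> j = set (take j xs)" for j
    have finS: "finite S" unfolding S_def by simp
    have cnn: "\<forall>s\<in>S. 0 \<le> c s" using cnn S_def by simp
    have ms: "monotone_submodular F S" using ms S_def by simp
    have bpos: "0 < b" unfolding b_def using assms Bpos by simp
    have bleB: "b \<le> B" unfolding b_def using assms Bpos by simp
    have Fspos: "0 < Fs" using Fspos S_def Fs_def by simp
    have orcS: "Orc A b \<subseteq> A \<and> sum c (Orc A b) \<le> b \<and> \<gamma> * Fopt F c A b \<le> F (Orc A b)" if "A \<subseteq> S" for A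
      using orc that bpos unfolding approx_oracle_def S_def by blast
    have setxs: "set xs = S" using gr unfolding is_greedy_seq_def S_def by simp
    have kle: "k \<le> length xs" and Fk: "F (\<chi> k) \<le> Fh / 2"
      and kmax: "\<And>k'. k < k' \<Longrightarrow> k' \<le> length xs \<Longrightarrow> Fh / 2 < F (\<chi> k')"
      using cut unfolding mech_cutoff_def \<chi>_def Fh_def S_def b_def by auto
    have chiS: "\<chi> j \<subseteq> S" for j unfolding \<chi>_def using setxs set_take_subset by metis
    have chimono: "i \<le> j \<Longrightarrow> \<chi> i \<subseteq> \<chi> j" for i j unfolding \<chi>_def by (rule set_take_subset_set_take)
    have Fnn: "A \<subseteq> S \<Longrightarrow> 0 \<le> F A" for A using ms_nonneg[OF ms] .
    have FhP: "Fh \<le> P" unfolding Fh_def P_def using orcS[of S] finS by (intro fopt_ge) auto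
    have FhP2: "\<gamma> * P \<le> Fh" unfolding Fh_def P_def using orcS[of S] by auto
    obtain T0 where T0: "T0 \<subseteq> S" "sum c T0 \<le> b" "F T0 = P"
      using fopt_obt[OF finS, of b c F] bpos unfolding P_def by auto
    obtain Ts where Ts: "Ts \<subseteq> S" "sum c Ts \<le> B" "F Ts = Fs"
      using fopt_obt[OF finS, of B c F] Bpos unfolding Fs_def by auto
    have PFs: "P \<le> Fs" unfolding Fs_def using fopt_ge[OF finS T0(1), of c B F] T0 bleB by auto
    have FsS: "Fs \<le> F S" using Ts ms_mono[OF ms] by auto
    have Pnn: "0 \<le> P" using T0 Fnn by auto
    have Fhs: "\<gamma> * (P - F {s}) \<le> F (Orc (S - {s}) b)" if "s \<in> S" for s
    proof -
      have a1: "F T0 \<le> F (T0 - {s}) + F {s}" using ms_remove[OF ms T0(1) that] .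
      have "sum c (T0 - {s}) \<le> sum c T0" using sum_c_mono[OF cnn finS, of "T0 - {s}" T0] T0 by auto
      then have a2: "F (T0 - {s}) \<le> Fopt F c (S - {s}) b"
        using T0 fopt_ge[OF _ _, of "S - {s}" "T0 - {s}" c b F] finS by auto
      have a3: "\<gamma> * Fopt F c (S - {s}) b \<le> F (Orc (S - {s}) b)" using orcS[of "S - {s}"] by auto
      have "P - F {s} \<le> Fopt F c (S - {s}) b" using a1 a2 T0(3) by linarith
      then have "\<gamma> * (P - F {s}) \<le> \<gamma> * Fopt F c (S - {s}) b" using assms by (intro mult_left_mono) auto
      then show ?thesis using a3 by linarith
    qed
    have thnn: "0 \<le> \<theta>" if ne: "S \<noteq> {}"
    proof -
      obtain s0 where s0: "s0 \<in> S" using ne by auto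
      have "F {s0} \<le> Max ((\<lambda>s. F {s}) ` S)" using finS s0 by (intro Max_ge) auto
      moreover have "0 \<le> F {s0}" using Fnn s0 by auto
      ultimately have "0 \<le> Max ((\<lambda>s. F {s}) ` S)" by linarith
      then show ?thesis unfolding \<theta>_def largeness_def Fs_def[symmetric] using Fspos by simp
    qed
    have epsge: "0 \<le> eps t" for t using eps_nn by auto
    show ?thesis
    proof -
      have nonempty_facts: "let m = Max ((\<lambda>s. F {s}) ` S) in
          (\<forall>s\<in>S. F {s} \<le> m) \<and> 0 \<le> m \<and> m = \<theta> * Fs \<and> \<gamma> * Fs - m \<le> P" if ne: "S \<noteq> {}"
      proof -
        define m where "m = Max ((\<lambda>s. F {s}) ` S)"
        have hm: "\<forall>s\<in>S. F {s} \<le> m" unfolding m_def using finS by auto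
        obtain s0 where "s0 \<in> S" using ne by auto
        then have "F {s0} \<le> m" "0 \<le> F {s0}" using hm Fnn[of "{s0}"] by auto
        then have m0: "0 \<le> m" by linarith
        have mth: "m = \<theta> * Fs" unfolding \<theta>_def largeness_def m_def Fs_def using Fspos Fs_def by simp
        have "\<gamma> * Fs - m \<le> P"
        proof (cases "sum c Ts \<le> b")
          case True
          then have "Fs \<le> P" unfolding P_def using Ts finS fopt_ge by metis
          moreover have "\<gamma> * Fs \<le> Fs" using assms Fspos by (intro mult_left_le_one_le) auto
          ultimately show ?thesis using m0 by linarith
        next
          case False
          obtain U where U: "U \<subseteq> Ts" "sum c U \<le> b" "b / sum c Ts * F Ts - m \<le> F U"
            using knap[OF ms finS cnn hm Ts(1), of b] False bpos by auto
          have cpos: "0 < sum c Ts" using False bpos by linarith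
          have "\<gamma> * sum c Ts \<le> \<gamma> * B" using Ts(2) assms by (intro mult_left_mono) auto
          then have "\<gamma> \<le> b / sum c Ts" using cpos unfolding b_def by (simp add: le_divide_eq)
          then have "\<gamma> * Fs \<le> (b / sum c Ts) * Fs" using Fspos by (intro mult_right_mono) auto
          then have "\<gamma> * Fs \<le> b / sum c Ts * F Ts" using Ts(3) by simp
          moreover have "F U \<le> P" unfolding P_def using fopt_ge[OF finS, of U c b F] U Ts(1) by auto
          ultimately show ?thesis using U by linarith
        qed
        then show ?thesis using hm m0 mth unfolding m_def Let_def by auto
      qed
      have pay: "mech_payment F {1..n} Orc (\<gamma> * B) xs k \<le> (1 + eps \<theta>) * B"
      proof (cases "k = 0")
        case True then show ?thesis unfolding mech_payment_def using Bpos epsge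
          by simp
      next
        case False
        then have ne: "S \<noteq> {}" using kle setxs by auto
        define m where "m = Max ((\<lambda>s. F {s}) ` S)"
        have hm: "\<forall>s\<in>S. F {s} \<le> m" and m0: "0 \<le> m" and mth: "m = \<theta> * Fs" and Pm: "\<gamma> * Fs - m \<le> P"
          using nonempty_facts[OF ne] unfolding m_def[symmetric] Let_def by auto
        have pay_eq: "mech_payment F {1..n} Orc (\<gamma> * B) xs k =
            (\<Sum>j<k. 2 * (b / F (Orc (S - {xs ! j}) b)) * (F (\<chi> (Suc j)) - F (\<chi> j)))"
          unfolding mech_payment_def S_def b_def \<chi>_def by simp
        have dnn: "0 \<le> F (\<chi> (Suc j)) - F (\<chi> j)" for j
          using ms_mono[OF ms chimono[of j "Suc j"] chiS] by simp
        have tele: "(\<Sum>j<k. F (\<chi> (Suc j)) - F (\<chi> j)) = F (\<chi> k) - F (\<chi> 0)"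
          by (rule sum_lessThan_telescope)
        have F0: "0 \<le> F (\<chi> 0)" using Fnn chiS by auto
        have winner: "xs ! j \<in> S \<and> F {xs ! j} \<le> P / 2" if "j < k" for j
        proof -
          have jl: "j < length xs" using that kle by simp
          have "take k xs ! j \<in> set (take k xs)" using that jl by (intro nth_mem) simp
          then have "xs ! j \<in> \<chi> k" unfolding \<chi>_def using that by simp
          then have "F {xs ! j} \<le> F (\<chi> k)" using ms_mono[OF ms _ chiS] by auto
          then show ?thesis using Fk FhP jl setxs by auto
        qed
        show ?thesis
        proof (cases "P = 0")
          case True
          have "2 * (b / F (Orc (S - {xs ! j}) b)) * (F (\<chi> (Suc j)) - F (\<chi> j)) \<le> 0" if "j < k" for j
          proof -
            have "F (\<chi> (Suc j)) \<le> F (\<chi> k)" using ms_mono[OF ms chimono chiS] that by simp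
            moreover have "0 \<le> F (\<chi> j)" using Fnn chiS by auto
            ultimately have "F (\<chi> (Suc j)) - F (\<chi> j) = 0" using Fk FhP True dnn[of j] by linarith
            then show ?thesis by simp
          qed
          then have "mech_payment F {1..n} Orc (\<gamma> * B) xs k \<le> 0" unfolding pay_eq
            by (intro sum_nonpos) auto
          moreover have "0 \<le> (1 + eps \<theta>) * B" using Bpos epsge[of \<theta>] by simp
          ultimately show ?thesis by linarith
        next
          case False
          then have Ppos: "0 < P" using Pnn by simp
          define D where "D = max (P - m) (P / 2)"
          have Dpos: "0 < D" unfolding D_def using Ppos by simp
          have trm: "2 * (b / F (Orc (S - {xs ! j}) b)) * (F (\<chi> (Suc j)) - F (\<chi> j))
                 \<le> 2 * (B / D) * (F (\<chi> (Suc j)) - F (\<chi> j))" if "j < k" for j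
          proof -
            have w: "xs ! j \<in> S" "F {xs ! j} \<le> P / 2" using winner[OF that] by auto
            have "D \<le> P - F {xs ! j}" unfolding D_def using w hm by auto
            then have "\<gamma> * D \<le> \<gamma> * (P - F {xs ! j})" using assms by (intro mult_left_mono) auto
            then have "\<gamma> * D \<le> F (Orc (S - {xs ! j}) b)" using Fhs[OF w(1)] by linarith
            moreover have "0 < \<gamma> * D" using assms Dpos by simp
            ultimately have "b / F (Orc (S - {xs ! j}) b) \<le> b / (\<gamma> * D)"
              using bpos by (intro divide_left_mono) auto
            also have "\<dots> = B / D" unfolding b_def using assms by simp
            finally show ?thesis using dnn[of j] by (intro mult_right_mono) auto
          qed
          have "mech_payment F {1..n} Orc (\<gamma> * B) xs k \<le> (\<Sum>j<k. 2 * (B / D) * (F (\<chi> (Suc j)) - F (\<chi> j)))"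
            unfolding pay_eq using trm by (intro sum_mono) auto
          also have "\<dots> = 2 * (B / D) * (F (\<chi> k) - F (\<chi> 0))" by (simp only: tele[symmetric] sum_distrib_left)
          also have "\<dots> \<le> 2 * (B / D) * (P / 2)"
            using Fk FhP F0 Bpos Dpos by (intro mult_left_mono) auto
          also have "\<dots> = B * (P / D)" by simp
          also have "\<dots> \<le> B * (1 + eps \<theta>)"
          proof (rule mult_left_mono)
            show "0 \<le> B" using Bpos by simp
            have th0: "0 \<le> \<theta>" using thnn ne by simp
            show "P / D \<le> 1 + eps \<theta>"
            proof (cases "\<theta> \<le> \<gamma> / 4")
              case True
              have e: "eps \<theta> = (2/\<gamma> + 2) * \<theta>" unfolding eps_def using True th0 by simp
              have mle: "m \<le> \<gamma> * Fs / 4" using mth True Fspos by (simp add: mult_right_mono mult.commute)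
              have PmF: "\<gamma> * Fs / 2 \<le> P - m" using Pm mle by linarith
              have g0: "0 < \<gamma> * Fs" using assms Fspos by simp
              then have PmPos: "0 < P - m" using PmF by linarith
              have "P / D \<le> P / (P - m)" unfolding D_def using PmPos Pnn
                by (intro divide_left_mono) auto
              also have "\<dots> = 1 + m / (P - m)" using PmPos by (simp add: field_simps)
              also have "m / (P - m) \<le> m / (\<gamma> * Fs / 2)"
              proof (rule divide_left_mono)
                show "\<gamma> * Fs / 2 \<le> P - m" "0 \<le> m" using PmF m0 by auto
                show "0 < (P - m) * (\<gamma> * Fs / 2)" using PmPos g0 by simp
              qed
              also have "m / (\<gamma> * Fs / 2) = 2 * \<theta> / \<gamma>" using mth Fspos assms by (simp add: field_simps)
              also have "\<dots> \<le> (2/\<gamma> + 2) * \<theta>" using th0 by (simp add: field_simps)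
              finally show ?thesis using e by simp
            next
              case False
              have e: "eps \<theta> = 2" unfolding eps_def using False th0 by simp
              have "P / D \<le> P / (P / 2)" unfolding D_def using Ppos by (intro divide_left_mono) auto
              then show ?thesis using e Ppos by simp
            qed
          qed
          finally show ?thesis by (simp add: mult.commute)
        qed
      qed
      have util: "(\<gamma>\<^sup>2 / 2 - eps \<theta>) * Fs \<le> F (\<chi> k)"
      proof (cases "k = length xs")
        case True
        then have "\<chi> k = S" unfolding \<chi>_def using setxs by simp
        moreover have "\<gamma>\<^sup>2 \<le> 1" using assms by (simp add: power_le_one)
        ultimately have "(\<gamma>\<^sup>2 / 2 - eps \<theta>) * Fs \<le> 1 * Fs" using Fspos epsge[of \<theta>]
          by (intro mult_right_mono) auto
        then show ?thesis using FsS \<open>\<chi> k = S\<close> by simp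
      next
        case False
        then have kl: "k < length xs" using kle by simp
        then have ne: "S \<noteq> {}" using setxs by auto
        define m where "m = Max ((\<lambda>s. F {s}) ` S)"
        have hm: "\<forall>s\<in>S. F {s} \<le> m" and m0: "0 \<le> m" and mth: "m = \<theta> * Fs" and Pm: "\<gamma> * Fs - m \<le> P"
          using nonempty_facts[OF ne] unfolding m_def[symmetric] Let_def by auto
        have xk: "xs ! k \<in> S" using kl setxs by auto
        have "\<chi> (Suc k) = insert (xs ! k) (\<chi> k)" unfolding \<chi>_def using kl
          by (simp add: take_Suc_conv_app_nth)
        then have "F (\<chi> (Suc k)) \<le> F (\<chi> k) + F {xs ! k}" using ms_insert[OF ms chiS xk] by simp
        moreover have "Fh / 2 < F (\<chi> (Suc k))" using kmax kl by simp
        moreover have "F {xs ! k} \<le> m" using hm xk by blast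
        ultimately have low: "\<gamma> * P / 2 - m \<le> F (\<chi> k)" using FhP2 by linarith
        have th0: "0 \<le> \<theta>" using thnn ne by simp
        show ?thesis
        proof (cases "\<theta> \<le> \<gamma> / 4")
          case True
          have e: "eps \<theta> = (2/\<gamma> + 2) * \<theta>" unfolding eps_def using True th0 by simp
          have "\<gamma> * (\<gamma> * Fs - m) \<le> \<gamma> * P" using Pm assms by (simp add: mult_left_mono)
          then have a: "\<gamma>\<^sup>2 * Fs / 2 - \<gamma> * m / 2 - m \<le> F (\<chi> k)" using low
            by (simp add: power2_eq_square algebra_simps)
          have "\<gamma> * m \<le> m" using assms m0 by (simp add: mult_left_le_one_le)
          then have "\<gamma>\<^sup>2 * Fs / 2 - 2 * m \<le> F (\<chi> k)" using a m0 by linarith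
          moreover have "2 * m \<le> eps \<theta> * Fs"
          proof -
            have tf: "0 \<le> \<theta> * Fs" using th0 Fspos by simp
            have "2 * (\<theta> * Fs) \<le> (2/\<gamma> + 2) * (\<theta> * Fs)" using tf assms by (intro mult_right_mono) auto
            then show ?thesis by (simp add: e mth mult.assoc)
          qed
          moreover have "(\<gamma>\<^sup>2 / 2 - eps \<theta>) * Fs = \<gamma>\<^sup>2 * Fs / 2 - eps \<theta> * Fs" by (simp add: algebra_simps)
          ultimately show ?thesis by linarith
        next
          case False
          have e: "eps \<theta> = 2" unfolding eps_def using False th0 by simp
          have "\<gamma>\<^sup>2 \<le> 1" using assms by (simp add: power_le_one)
          then have "(\<gamma>\<^sup>2 / 2 - eps \<theta>) * Fs \<le> 0" using e Fspos by (intro mult_nonpos_nonneg) auto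
          moreover have "0 \<le> F (\<chi> k)" using Fnn chiS by auto
          ultimately show ?thesis by linarith
        qed
      qed
      show ?thesis using pay util unfolding \<theta>_def Fs_def \<chi>_def S_def by simp
    qed
  qed
  show ?thesis
    apply (rule exI[of _ eps])
    apply (intro conjI eps_nn lim)
    apply (intro allI impI)
    apply (elim conjE)
    apply (rule main)
          apply assumption+
    done
qed

end
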